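(* Let $\mathcal{E}$ be a left $\tilde{\mathcal{A}}_{conv.}$-module such that (1) $B(\mathcal{E})\subset\tilde A(\mathcal{E})$ and (2) there exists $N\in\mathbb{N}$ with $a^N\tilde A(\mathcal{E})=0$. Then $B(\mathcal{E})=\tilde A(\mathcal{E})\subset\ker b^{2N}$.
   Context: $\tilde{\mathcal{A}}_{conv.}$ is the algebra of formal series $\sum\gamma_{p,q}a^pb^q$ in variables $a,b$ with $ab-ba=b^2$ such that $|\gamma_{p,q}|\le C_RR^{p+q}q!$ for some $R>1$, $C_R>0$; $B=\mathbb{C}\{\{b\}\}$ is its subalgebra of series $\sum c_qb^q$ with $|c_q|\le CR^qq!$. For a left $\tilde{\mathcal{A}}_{conv.}$-module $\mathcal{E}$: $B(\mathcal{E}):=\{x\in\mathcal{E}:\exists N,\ b^Nx=0\}$ is its $b$-torsion, $A(\mathcal{E})$ its $a$-torsion $\{x:\exists N,\ a^Nx=0\}$, and $\tilde A(\mathcal{E}):=\{x\in\mathcal{E}: Bx\subset A(\mathcal{E})\}$. *)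

theory Defs
  imports Complex_Main
begin

text \<open>An element \<open>\<Sum> \<gamma>(p,q) a^p b^q\<close> (normally ordered: powers of a to the left)
  of the algebra of formal series in a, b with ab - ba = b^2 is represented by its
  coefficient function \<open>\<gamma> :: nat \<Rightarrow> nat \<Rightarrow> complex\<close>.\<close>

type_synonym ser = "nat \<Rightarrow> nat \<Rightarrow> complex"

text \<open>Structure constants: \<open>b^q a^r = \<Sum>_{i,j} bacoef q r i j a^i b^j\<close>.
  Derived from \<open>b^j a = (a - j b) b^j\<close>, i.e.
  \<open>a^i b^j a = a^(i+1) b^j - j a^i b^(j+1)\<close>.\<close>
primrec bacoef :: "nat \<Rightarrow> nat \<Rightarrow> nat \<Rightarrow> nat \<Rightarrow> int" where
  "bacoef q 0 i j = (if i = 0 \<and> j = q then 1 else 0)"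
| "bacoef q (Suc r) i j =
     (if i = 0 then 0 else bacoef q r (i - 1) j)
   - (if j = 0 then 0 else int (j - 1) * bacoef q r i (j - 1))"

text \<open>Product: \<open>a^p b^q \<cdot> a^r b^s = a^p (b^q a^r) b^s\<close>; each coefficient is a finite sum.\<close>
definition A_mult :: "ser \<Rightarrow> ser \<Rightarrow> ser" where
  "A_mult f g = (\<lambda>i j. \<Sum>p\<le>i. \<Sum>s\<le>j. \<Sum>q\<le>(i - p) + (j - s).
      f p q * g ((i - p) + (j - s) - q) s * of_int (bacoef q ((i - p) + (j - s) - q) (i - p) (j - s)))"

definition A_add :: "ser \<Rightarrow> ser \<Rightarrow> ser" where
  "A_add f g = (\<lambda>p q. f p q + g p q)"

definition A_one :: ser where
  "A_one = (\<lambda>p q. if p = 0 \<and> q = 0 then 1 else 0)"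

definition A_a :: ser where
  "A_a = (\<lambda>p q. if p = 1 \<and> q = 0 then 1 else 0)"

definition A_b :: ser where
  "A_b = (\<lambda>p q. if p = 0 \<and> q = 1 then 1 else 0)"

definition Aconv :: "ser set" where
  "Aconv = {\<gamma>. \<exists>R C. R > 1 \<and> C > 0 \<and>
      (\<forall>p q. norm (\<gamma> p q) \<le> C * R ^ (p + q) * fact q)}"

definition Bconv :: "ser set" where
  "Bconv = {\<gamma>. (\<forall>p q. p \<noteq> 0 \<longrightarrow> \<gamma> p q = 0) \<and>
      (\<exists>R C. R > 1 \<and> C > 0 \<and> (\<forall>q. norm (\<gamma> 0 q) \<le> C * R ^ q * fact q))}"

definition Aconv_module :: "(ser \<Rightarrow> 'm::ab_group_add \<Rightarrow> 'm) \<Rightarrow> bool" where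
  "Aconv_module act \<longleftrightarrow>
     (\<forall>f\<in>Aconv. \<forall>x y. act f (x + y) = act f x + act f y) \<and>
     (\<forall>f\<in>Aconv. \<forall>g\<in>Aconv. \<forall>x. act (A_add f g) x = act f x + act g x) \<and>
     (\<forall>f\<in>Aconv. \<forall>g\<in>Aconv. \<forall>x. act (A_mult f g) x = act f (act g x)) \<and>
     (\<forall>x. act A_one x = x)"

definition btors :: "(ser \<Rightarrow> 'm::ab_group_add \<Rightarrow> 'm) \<Rightarrow> 'm set" where
  "btors act = {x. \<exists>N. (act A_b ^^ N) x = 0}"

definition ators :: "(ser \<Rightarrow> 'm::ab_group_add \<Rightarrow> 'm) \<Rightarrow> 'm set" where
  "ators act = {x. \<exists>N. (act A_a ^^ N) x = 0}"

definition atilde :: "(ser \<Rightarrow> 'm::ab_group_add \<Rightarrow> 'm) \<Rightarrow> 'm set" where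
  "atilde act = {x. \<forall>\<beta>\<in>Bconv. act \<beta> x \<in> ators act}"

end

theory Submission
  imports Defs
begin


lemma sum_single:
  assumes "finite S" "k \<in> S" "\<And>x. x \<in> S \<Longrightarrow> x \<noteq> k \<Longrightarrow> f x = 0"
  shows "sum f S = f k"
proof -
  have "sum f S = f k + sum f (S - {k})" using assms(1,2) by (simp add: sum.remove)
  also have "sum f (S - {k}) = 0" using assms(3) by (intro sum.neutral) auto
  finally show ?thesis by simp
qed

lemma sum_zero_all: "(\<And>x. x \<in> S \<Longrightarrow> f x = 0) \<Longrightarrow> sum f S = 0"
  by (rule sum.neutral) auto

lemma bacoef0: "bacoef 0 r i j = (if i = r \<and> j = 0 then 1 else 0)"
  by (induction r arbitrary: i j) auto

lemma L1: "A_mult A_a g = (\<lambda>i j. if i = 0 then 0 else g (i - 1) j)"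
proof (intro ext)
  fix i j
  show "A_mult A_a g i j = (if i = 0 then 0 else g (i - 1) j)"
  proof (cases "i = 0")
    case True
    then show ?thesis unfolding A_mult_def A_a_def by simp
  next
    case False
    have "A_mult A_a g i j = (\<Sum>s\<le>j. \<Sum>q\<le>(i - 1) + (j - s).
      A_a 1 q * g ((i - 1) + (j - s) - q) s * of_int (bacoef q ((i - 1) + (j - s) - q) (i - 1) (j - s)))"
      unfolding A_mult_def
      by (rule sum_single) (use False in \<open>auto simp: A_a_def\<close>)
    also have "\<dots> = (\<Sum>q\<le>(i - 1) + (j - j).
      A_a 1 q * g ((i - 1) + (j - j) - q) j * of_int (bacoef q ((i - 1) + (j - j) - q) (i - 1) (j - j)))"
      by (rule sum_single) (auto intro!: sum_zero_all simp: A_a_def bacoef0)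
    also have "\<dots> = g (i - 1) j"
      by (subst sum_single[where k=0]) (auto simp: A_a_def bacoef0)
    finally show ?thesis using False by simp
  qed
qed

definition Btype :: "ser \<Rightarrow> bool" where
  "Btype \<beta> \<longleftrightarrow> (\<forall>p q. p \<noteq> 0 \<longrightarrow> \<beta> p q = 0)"

lemma L2:
  assumes "Btype \<beta>"
  shows "A_mult \<beta> g i j = (\<Sum>s\<le>j. \<Sum>q\<le>i + (j - s).
      \<beta> 0 q * g (i + (j - s) - q) s * of_int (bacoef q (i + (j - s) - q) i (j - s)))"
  unfolding A_mult_def
  by (subst sum_single[where k=0]) (use assms in \<open>auto simp: Btype_def\<close>)

lemma LB:
  assumes "Btype \<beta>"
  shows "A_mult \<beta> A_b = (\<lambda>i j. if i = 0 \<and> j \<noteq> 0 then \<beta> 0 (j - 1) else 0)"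
proof (intro ext)
  fix i j
  show "A_mult \<beta> A_b i j = (if i = 0 \<and> j \<noteq> 0 then \<beta> 0 (j - 1) else 0)"
  proof (cases "j = 0")
    case True
    then show ?thesis unfolding L2[OF assms] by (auto simp: A_b_def)
  next
    case False
    have "A_mult \<beta> A_b i j = (\<Sum>q\<le>i + (j - 1).
      \<beta> 0 q * A_b (i + (j - 1) - q) 1 * of_int (bacoef q (i + (j - 1) - q) i (j - 1)))"
      unfolding L2[OF assms]
      by (rule sum_single) (use False in \<open>auto intro!: sum_zero_all simp: A_b_def\<close>)
    also have "\<dots> = \<beta> 0 (i + (j - 1)) * of_int (bacoef (i + (j - 1)) 0 i (j - 1))"
      by (subst sum_single[where k="i + (j - 1)"]) (auto simp: A_b_def)
    also have "\<dots> = (if i = 0 \<and> j \<noteq> 0 then \<beta> 0 (j - 1) else 0)"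
      using False by auto
    finally show ?thesis .
  qed
qed

lemma bacoef1: "bacoef q (Suc 0) i j =
   (if i = 1 \<and> j = q then 1 else 0) - (if j \<noteq> 0 \<and> i = 0 \<and> j - 1 = q then int (j - 1) else 0)"
  by auto

lemma LA:
  assumes "Btype \<beta>"
  shows "A_mult \<beta> A_a = (\<lambda>i j. if i = 1 then \<beta> 0 j
      else if i = 0 \<and> j \<noteq> 0 then - of_nat (j - 1) * \<beta> 0 (j - 1) else 0)"
proof (intro ext)
  fix i j
  show "A_mult \<beta> A_a i j = (if i = 1 then \<beta> 0 j
      else if i = 0 \<and> j \<noteq> 0 then - of_nat (j - 1) * \<beta> 0 (j - 1) else 0)"
  proof (cases "i + j = 0")
    case True
    then show ?thesis unfolding L2[OF assms] by (auto simp: A_a_def)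
  next
    case False
    have "A_mult \<beta> A_a i j = (\<Sum>q\<le>i + j.
      \<beta> 0 q * A_a (i + j - q) 0 * of_int (bacoef q (i + j - q) i j))"
      unfolding L2[OF assms]
      by (subst sum_single[where k=0]) (auto intro!: sum_zero_all simp: A_a_def)
    also have "\<dots> = \<beta> 0 (i + j - 1) * of_int (bacoef (i + j - 1) 1 i j)"
      by (subst sum_single[where k="i + j - 1"]) (use False in \<open>auto simp: A_a_def\<close>)
    also have "\<dots> = (if i = 1 then \<beta> 0 j
      else if i = 0 \<and> j \<noteq> 0 then - of_nat (j - 1) * \<beta> 0 (j - 1) else 0)"
      using False by (auto simp: bacoef1 of_nat_diff algebra_simps simp del: bacoef.simps)
    finally show ?thesis .
  qed
qed



fun nsm :: "nat \<Rightarrow> 'm::ab_group_add \<Rightarrow> 'm" where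
  "nsm 0 x = 0"
| "nsm (Suc n) x = x + nsm n x"

lemma nsm_add_n: "nsm (a + b) x = nsm a x + nsm b x"
  by (induction a) (auto simp: add.assoc)

lemma nsm_zero[simp]: "nsm n 0 = 0"
  by (induction n) auto

lemma nsm_plus: "nsm n (x + y) = nsm n x + nsm n y"
  by (induction n) (auto simp: algebra_simps)

lemma nsm_mult: "nsm a (nsm b x) = nsm (a * b) x"
  by (induction a) (auto simp: nsm_add_n)

lemma nsm_one[simp]: "nsm 1 x = x" by simp

lemma additive_funpow:
  fixes f :: "'m::ab_group_add \<Rightarrow> 'm"
  assumes "\<forall>x y. f (x + y) = f x + f y"
  shows "(f ^^ n) (x + y) = (f ^^ n) x + (f ^^ n) y"
  using assms by (induction n arbitrary: x y) auto

lemma additive_zero: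
  fixes f :: "'m::ab_group_add \<Rightarrow> 'm"
  assumes "\<forall>x y. f (x + y) = (f x + f y :: 'm::ab_group_add)"
  shows "f 0 = 0"
proof -
  have "f (0 + 0) = f 0 + f 0" using assms by blast
  then show ?thesis by simp
qed

lemma additive_nsm:
  fixes f :: "'m::ab_group_add \<Rightarrow> 'm"
  assumes "\<forall>x y. f (x + y) = (f x + f y :: 'm::ab_group_add)"
  shows "f (nsm n x) = nsm n (f x)"
  using assms additive_zero[OF assms] by (induction n) auto

lemma core:
  fixes Aop Bop :: "'m::ab_group_add \<Rightarrow> 'm" and M :: "'m set" and N :: nat
  assumes addA: "\<forall>x y. Aop (x + y) = Aop x + Aop y"
    and addB: "\<forall>x y. Bop (x + y) = Bop x + Bop y"
    and rel: "\<forall>w. Aop (Bop w) = Bop (Aop w) + Bop (Bop w)"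
    and canc: "\<forall>n (x::'m). n > 0 \<longrightarrow> nsm n x = 0 \<longrightarrow> x = 0"
    and MA: "\<forall>y\<in>M. Aop y \<in> M" and MB: "\<forall>y\<in>M. Bop y \<in> M"
    and kill: "\<forall>y\<in>M. (Aop ^^ N) y = 0"
  shows "\<forall>y\<in>M. (Bop ^^ (2 * N)) y = 0"
proof -
  have addAn: "\<forall>x y. (Aop ^^ n) (x + y) = (Aop ^^ n) x + (Aop ^^ n) y" for n
    using additive_funpow[OF addA] by blast
  have addBn: "\<forall>x y. (Bop ^^ n) (x + y) = (Bop ^^ n) x + (Bop ^^ n) y" for n
    using additive_funpow[OF addB] by blast
  have B0: "(Bop ^^ n) 0 = 0" for n using additive_zero[OF addBn] .
  have addBA: "\<forall>x y. (Bop ^^ e) ((Aop ^^ m) (x + y)) = (Bop ^^ e) ((Aop ^^ m) x) + (Bop ^^ e) ((Aop ^^ m) y)" for e m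
    using addAn addBn by simp
  have comm: "Aop ((Bop ^^ r) w) = (Bop ^^ r) (Aop w) + nsm r ((Bop ^^ Suc r) w)" for r w
  proof (induction r arbitrary: w)
    case 0
    then show ?case by simp
  next
    case (Suc r)
    have "Aop ((Bop ^^ Suc r) w) = Aop ((Bop ^^ r) (Bop w))" by (simp add: funpow_Suc_right del: funpow.simps)
    also have "\<dots> = (Bop ^^ r) (Aop (Bop w)) + nsm r ((Bop ^^ Suc r) (Bop w))" by (rule Suc.IH)
    also have "\<dots> = (Bop ^^ r) (Bop (Aop w)) + (Bop ^^ r) (Bop (Bop w)) + nsm r ((Bop ^^ Suc r) (Bop w))"
      using rel addBn by simp
    also have "\<dots> = (Bop ^^ Suc r) (Aop w) + nsm (Suc r) ((Bop ^^ Suc (Suc r)) w)"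
      by (simp add: funpow_Suc_right add.assoc del: funpow.simps)
    finally show ?case .
  qed
  have MAn: "y \<in> M \<Longrightarrow> (Aop ^^ t) y \<in> M" for t y
    using MA by (induction t) auto
  define V where "V s t \<longleftrightarrow> (\<forall>y\<in>M. (Bop ^^ s) ((Aop ^^ t) y) = 0)" for s t
  have mono: "V s' t" if "V s t" "s \<le> s'" for s s' t
  proof -
    have "(Bop ^^ s') = (Bop ^^ (s' - s)) \<circ> (Bop ^^ s)"
      using that(2) by (simp add: funpow_add[symmetric])
    then show ?thesis using that(1) B0 unfolding V_def by simp
  qed
  have main: "i \<le> N \<Longrightarrow> V (2 * N - i) i" for i
  proof (induction "N - i" arbitrary: i rule: less_induct)
    case less
    show ?case
    proof (cases "i = N")
      case True
      then show ?thesis using kill B0 unfolding V_def by (simp add: mult_2)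
    next
      case False
      with less.prems have iN: "i < N" by simp
      have H: "V s t" if "t > i" "s + t \<ge> 2 * N" for s t
      proof (cases "t \<ge> N")
        case True
        have "(Aop ^^ t) = (Aop ^^ N) \<circ> (Aop ^^ (t - N))"
          using True by (simp add: funpow_add[symmetric])
        then show ?thesis using kill MAn B0 unfolding V_def by simp
      next
        case False
        then have "V (2 * N - t) t" using less.hyps[of t] that by simp
        then show ?thesis by (rule mono) (use that in simp)
      qed
      have T: "\<forall>i' e r y. i' \<ge> i \<longrightarrow> y \<in> M \<longrightarrow> e + r + m + i' \<ge> 2 * N \<longrightarrow>
          (Bop ^^ e) ((Aop ^^ m) ((Bop ^^ r) ((Aop ^^ i') y)))
            = nsm (pochhammer r m) ((Bop ^^ (e + r + m)) ((Aop ^^ i') y))" for m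
      proof (induction m)
        case 0
        then show ?case by (simp add: funpow_add)
      next
        case (Suc m)
        show ?case
        proof (intro allI impI)
          fix i' e r y
          assume a: "i \<le> i'" "y \<in> M" "2 * N \<le> e + r + Suc m + i'"
          have "(Bop ^^ e) ((Aop ^^ Suc m) ((Bop ^^ r) ((Aop ^^ i') y)))
              = (Bop ^^ e) ((Aop ^^ m) (Aop ((Bop ^^ r) ((Aop ^^ i') y))))"
            by (simp add: funpow_Suc_right del: funpow.simps)
          also have "\<dots> = (Bop ^^ e) ((Aop ^^ m) ((Bop ^^ r) ((Aop ^^ Suc i') y)))
              + (Bop ^^ e) ((Aop ^^ m) (nsm r ((Bop ^^ Suc r) ((Aop ^^ i') y))))"
            using comm addBA by simp
          also have "(Bop ^^ e) ((Aop ^^ m) ((Bop ^^ r) ((Aop ^^ Suc i') y)))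
              = nsm (pochhammer r m) ((Bop ^^ (e + r + m)) ((Aop ^^ Suc i') y))"
            using Suc.IH[rule_format, where i'="Suc i'" and e=e and r=r and y=y] a by (simp del: funpow.simps)
          also have "(Bop ^^ (e + r + m)) ((Aop ^^ Suc i') y) = 0"
            using H[of "Suc i'" "e + r + m"] a unfolding V_def by auto
          also have "(Bop ^^ e) ((Aop ^^ m) (nsm r ((Bop ^^ Suc r) ((Aop ^^ i') y))))
              = nsm r ((Bop ^^ e) ((Aop ^^ m) ((Bop ^^ Suc r) ((Aop ^^ i') y))))"
            using additive_nsm[OF addBA] by blast
          also have "(Bop ^^ e) ((Aop ^^ m) ((Bop ^^ Suc r) ((Aop ^^ i') y)))
              = nsm (pochhammer (Suc r) m) ((Bop ^^ (e + Suc r + m)) ((Aop ^^ i') y))"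
            using Suc.IH[rule_format, where i'="i'" and e=e and r="Suc r" and y=y] a by (simp del: funpow.simps)
          finally show "(Bop ^^ e) ((Aop ^^ Suc m) ((Bop ^^ r) ((Aop ^^ i') y)))
              = nsm (pochhammer r (Suc m)) ((Bop ^^ (e + r + Suc m)) ((Aop ^^ i') y))"
            by (simp add: nsm_mult pochhammer_rec)
        qed
      qed
      show ?thesis unfolding V_def
      proof
        fix y assume y: "y \<in> M"
        have "Bop ((Aop ^^ i) y) \<in> M" using MB MAn y by blast
        then have z: "(Bop ^^ (N - 1 - i)) ((Aop ^^ N) ((Bop ^^ 1) ((Aop ^^ i) y))) = 0"
          using kill B0 by simp
        have eq: "(Bop ^^ (N - 1 - i)) ((Aop ^^ N) ((Bop ^^ 1) ((Aop ^^ i) y)))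
            = nsm (pochhammer 1 N) ((Bop ^^ (N - 1 - i + 1 + N)) ((Aop ^^ i) y))"
          using T[of N, rule_format, where i'=i and e="N - 1 - i" and r=1 and y=y] y iN by (simp del: funpow.simps)
        have idx: "N - 1 - i + 1 + N = 2 * N - i" using iN by simp
        have pp: "pochhammer (1::nat) N > 0" by (metis pochhammer_fact fact_gt_zero)
        have "nsm (pochhammer 1 N) ((Bop ^^ (N - 1 - i + 1 + N)) ((Aop ^^ i) y)) = 0"
          using z eq by simp
        then have "nsm (pochhammer 1 N) ((Bop ^^ (2 * N - i)) ((Aop ^^ i) y)) = 0"
          using idx by (simp only:)
        then show "(Bop ^^ (2 * N - i)) ((Aop ^^ i) y) = 0"
          using canc pp by (meson)
      qed
    qed
  qed
  show ?thesis using main[of 0] unfolding V_def by simp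
qed



lemma aconv_bound:
  assumes "\<And>p q. norm (f p q) \<le> K"
  shows "f \<in> Aconv"
proof -
  have K0: "K \<ge> 0" using assms[of 0 0] by (meson norm_ge_zero order_trans)
  have "norm (f p q) \<le> (K + 1) * 2 ^ (p + q) * fact q" for p q
  proof -
    have h1: "(1::real) \<le> 2 ^ (p + q)" by simp
    have h2: "(1::real) \<le> fact q" by (rule fact_ge_1)
    have h3: "(1::real) \<le> 2 ^ (p + q) * fact q" using mult_mono[OF h1 h2] by simp
    have "K + 1 \<le> (K + 1) * (2 ^ (p + q) * fact q)"
      using mult_left_mono[OF h3, of "K + 1"] K0 by simp
    then show ?thesis using assms[of p q] by (simp add: mult.assoc)
  qed
  then show ?thesis unfolding Aconv_def using K0
    by (intro CollectI exI[of _ "2::real"] exI[of _ "K + 1"]) auto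
qed

lemma aconv_le1: "(\<And>p q. norm (f p q) \<le> 1) \<Longrightarrow> f \<in> Aconv"
  by (rule aconv_bound)

lemma A_a_Aconv: "A_a \<in> Aconv" by (rule aconv_le1) (simp add: A_a_def)
lemma A_b_Aconv: "A_b \<in> Aconv" by (rule aconv_le1) (simp add: A_b_def)
lemma A_one_Aconv: "A_one \<in> Aconv" by (rule aconv_le1) (simp add: A_one_def)

definition scal :: "complex \<Rightarrow> ser" where
  "scal c = (\<lambda>p q. if p = 0 \<and> q = 0 then c else 0)"

lemma scal_Aconv: "scal c \<in> Aconv" by (rule aconv_bound[where K="norm c"]) (simp add: scal_def)
lemma scal_add: "A_add (scal a) (scal b) = scal (a + b)"
  unfolding A_add_def scal_def by (intro ext) auto
lemma scal_one: "scal 1 = A_one" by (auto simp: A_one_def scal_def)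

lemma Btype_A_b: "Btype A_b" by (simp add: Btype_def A_b_def)

lemma Bconv_Btype: "\<beta> \<in> Bconv \<Longrightarrow> Btype \<beta>"
  by (simp add: Bconv_def Btype_def)

lemma Bconv_Aconv: assumes "\<beta> \<in> Bconv" shows "\<beta> \<in> Aconv"
proof -
  obtain R C where RC: "R > 1" "C > 0" "\<forall>q. norm (\<beta> 0 q) \<le> C * R ^ q * fact q"
    and z: "\<forall>p q. p \<noteq> 0 \<longrightarrow> \<beta> p q = 0" using assms unfolding Bconv_def by blast
  have "norm (\<beta> p q) \<le> C * R ^ (p + q) * fact q" for p q
  proof (cases "p = 0")
    case True then show ?thesis using RC by simp
  next
    case False
    have "0 \<le> C * R ^ (p + q) * fact q" using RC by simp
    then show ?thesis using z False by simp
  qed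
  then show ?thesis unfolding Aconv_def using RC by blast
qed

lemma jm1: "(j - Suc 0 = Suc 0) = (j = (2::nat))" by auto

lemma ab_eq: "A_mult A_a A_b = A_add (A_mult A_b A_a) (A_mult A_b A_b)"
  unfolding L1 LA[OF Btype_A_b] LB[OF Btype_A_b] A_add_def by (intro ext) (auto simp: A_b_def jm1)

lemma ba_Aconv: "A_mult A_b A_a \<in> Aconv"
  unfolding LA[OF Btype_A_b] by (rule aconv_le1) (auto simp: A_b_def jm1)
lemma bb_Aconv: "A_mult A_b A_b \<in> Aconv"
  unfolding LB[OF Btype_A_b] by (rule aconv_le1) (auto simp: A_b_def jm1)

lemma fact_step: "q \<noteq> 0 \<Longrightarrow> (fact (q - 1) :: real) \<le> fact q"
  by (simp add: fact_mono)

lemma fact_step2: "q \<noteq> 0 \<Longrightarrow> real (q - 1) * (fact (q - 1) :: real) \<le> fact q"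
proof -
  assume q: "q \<noteq> 0"
  have "fact q = real q * fact (q - 1)" using q by (simp add: fact_reduce)
  moreover have "real (q - 1) * (fact (q - 1) :: real) \<le> real q * fact (q - 1)"
    by (intro mult_right_mono) auto
  ultimately show ?thesis by simp
qed

lemma bB_Bconv: assumes "\<beta> \<in> Bconv" shows "A_mult \<beta> A_b \<in> Bconv"
proof -
  obtain R C where RC: "R > 1" "C > 0" "\<forall>q. norm (\<beta> 0 q) \<le> C * R ^ q * fact q"
    using assms unfolding Bconv_def by blast
  have "norm (A_mult \<beta> A_b 0 q) \<le> C * R ^ q * fact q" for q
  proof (cases "q = 0")
    case True then show ?thesis using RC by (simp add: LB[OF Bconv_Btype[OF assms]])
  next
    case False
    have "norm (\<beta> 0 (q - 1)) \<le> C * R ^ (q - 1) * fact (q - 1)" using RC by blast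
    also have "\<dots> \<le> C * R ^ q * fact q"
      using RC False by (intro mult_mono power_increasing fact_step) auto
    finally show ?thesis using False by (simp add: LB[OF Bconv_Btype[OF assms]])
  qed
  moreover have "\<forall>p q. p \<noteq> 0 \<longrightarrow> A_mult \<beta> A_b p q = 0"
    by (simp add: LB[OF Bconv_Btype[OF assms]])
  ultimately show ?thesis unfolding Bconv_def using RC by blast
qed

definition gam :: "ser \<Rightarrow> ser" where
  "gam \<beta> = (\<lambda>i j. if i = 0 \<and> j \<noteq> 0 then - of_nat (j - 1) * \<beta> 0 (j - 1) else 0)"

lemma bA_eq: assumes "Btype \<beta>" shows "A_mult \<beta> A_a = A_add (A_mult A_a \<beta>) (gam \<beta>)"
  unfolding LA[OF assms] L1 A_add_def gam_def by (intro ext) (use assms in \<open>auto simp: Btype_def\<close>)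

lemma gam_Bconv: assumes "\<beta> \<in> Bconv" shows "gam \<beta> \<in> Bconv"
proof -
  obtain R C where RC: "R > 1" "C > 0" "\<forall>q. norm (\<beta> 0 q) \<le> C * R ^ q * fact q"
    using assms unfolding Bconv_def by blast
  have "norm (gam \<beta> 0 q) \<le> C * R ^ q * fact q" for q
  proof (cases "q = 0")
    case True then show ?thesis using RC by (simp add: gam_def)
  next
    case False
    have "norm (gam \<beta> 0 q) = real (q - 1) * norm (\<beta> 0 (q - 1))"
      using False by (simp add: gam_def norm_mult del: of_nat_diff)
    also have "\<dots> \<le> real (q - 1) * (C * R ^ (q - 1) * fact (q - 1))"
      using RC by (intro mult_left_mono) auto
    also have "\<dots> = C * R ^ (q - 1) * (real (q - 1) * fact (q - 1))" by simp
    also have "\<dots> \<le> C * R ^ q * fact q"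
      using RC False by (intro mult_mono power_increasing fact_step2) auto
    finally show ?thesis .
  qed
  moreover have "\<forall>p q. p \<noteq> 0 \<longrightarrow> gam \<beta> p q = 0"
    by (simp add: gam_def)
  ultimately show ?thesis unfolding Bconv_def using RC by blast
qed

lemma aB_Aconv: assumes "\<beta> \<in> Bconv" shows "A_mult A_a \<beta> \<in> Aconv"
proof -
  obtain R C where RC: "R > 1" "C > 0" "\<forall>q. norm (\<beta> 0 q) \<le> C * R ^ q * fact q"
    and z: "\<forall>p q. p \<noteq> 0 \<longrightarrow> \<beta> p q = 0" using assms unfolding Bconv_def by blast
  have "norm (A_mult A_a \<beta> p q) \<le> C * R ^ (p + q) * fact q" for p q
  proof (cases "p = 1")
    case True
    have "norm (\<beta> 0 q) \<le> C * R ^ q * fact q" using RC by blast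
    also have "\<dots> \<le> C * R ^ (p + q) * fact q"
      using RC by (intro mult_mono power_increasing) auto
    finally show ?thesis using True by (simp add: L1)
  next
    case False
    have "0 \<le> C * R ^ (p + q) * fact q" using RC by simp
    then show ?thesis using z False by (cases "p = 0") (auto simp: L1)
  qed
  then show ?thesis unfolding Aconv_def using RC by blast
qed



context
  fixes act :: "ser \<Rightarrow> 'm::ab_group_add \<Rightarrow> 'm"
  assumes md: "Aconv_module act"
begin

lemma m_add: "f \<in> Aconv \<Longrightarrow> act f (x + y) = act f x + act f y"
  using md unfolding Aconv_module_def by blast
lemma m_addser: "f \<in> Aconv \<Longrightarrow> g \<in> Aconv \<Longrightarrow> act (A_add f g) x = act f x + act g x"
  using md unfolding Aconv_module_def by blast
lemma m_mult: "f \<in> Aconv \<Longrightarrow> g \<in> Aconv \<Longrightarrow> act (A_mult f g) x = act f (act g x)"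
  using md unfolding Aconv_module_def by blast
lemma m_one: "act A_one x = x"
  using md unfolding Aconv_module_def by blast

lemma m_additive: "f \<in> Aconv \<Longrightarrow> \<forall>x y. act f (x + y) = act f x + act f y"
  using m_add by blast

lemma m_zero: "f \<in> Aconv \<Longrightarrow> act f 0 = 0"
  using additive_zero[OF m_additive] by blast

lemma m_rel: "act A_a (act A_b w) = act A_b (act A_a w) + act A_b (act A_b w)"
proof -
  have "act A_a (act A_b w) = act (A_mult A_a A_b) w"
    using m_mult[OF A_a_Aconv A_b_Aconv] by simp
  also have "\<dots> = act (A_mult A_b A_a) w + act (A_mult A_b A_b) w"
    unfolding ab_eq by (rule m_addser[OF ba_Aconv bb_Aconv])
  also have "\<dots> = act A_b (act A_a w) + act A_b (act A_b w)"
    using m_mult[OF A_b_Aconv A_a_Aconv] m_mult[OF A_b_Aconv A_b_Aconv] by simp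
  finally show ?thesis .
qed

lemma m_nsm_scal: "nsm n (act (scal c) x) = act (scal (of_nat n * c)) x"
proof (induction n)
  case 0
  have "act (scal 0) x = act (A_add (scal 0) (scal 0)) x" by (simp add: scal_add)
  also have "\<dots> = act (scal 0) x + act (scal 0) x" by (rule m_addser[OF scal_Aconv scal_Aconv])
  finally show ?case by simp
next
  case (Suc n)
  have "nsm (Suc n) (act (scal c) x) = act (scal c) x + act (scal (of_nat n * c)) x"
    using Suc by simp
  also have "\<dots> = act (A_add (scal c) (scal (of_nat n * c))) x"
    by (rule m_addser[OF scal_Aconv scal_Aconv, symmetric])
  also have "\<dots> = act (scal (of_nat (Suc n) * c)) x" by (simp add: scal_add algebra_simps)
  finally show ?case .
qed

lemma m_canc: "\<forall>n (x::'m). n > 0 \<longrightarrow> nsm n x = 0 \<longrightarrow> x = 0"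
proof (intro allI impI)
  fix n :: nat and x :: 'm
  assume n: "n > 0" and z: "nsm n x = 0"
  have "x = act (scal 1) x" by (simp add: scal_one m_one)
  also have "scal 1 = scal (of_nat n * (1 / of_nat n))" using n by simp
  also have "act \<dots> x = nsm n (act (scal (1 / of_nat n)) x)" by (rule m_nsm_scal[symmetric])
  also have "\<dots> = act (scal (1 / of_nat n)) (nsm n x)"
    by (rule additive_nsm[OF m_additive[OF scal_Aconv], symmetric])
  also have "\<dots> = 0" using z m_zero[OF scal_Aconv] by simp
  finally show "x = 0" .
qed

lemma ators_A: "z \<in> ators act \<Longrightarrow> act A_a z \<in> ators act"
proof -
  assume "z \<in> ators act"
  then obtain n where "(act A_a ^^ n) z = 0" unfolding ators_def by blast
  then have "(act A_a ^^ Suc n) (z) = 0" using m_zero[OF A_a_Aconv] by simp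
  then have "(act A_a ^^ n) (act A_a z) = 0" by (simp add: funpow_Suc_right del: funpow.simps)
  then show ?thesis unfolding ators_def by blast
qed

lemma ators_add: "z1 \<in> ators act \<Longrightarrow> z2 \<in> ators act \<Longrightarrow> z1 + z2 \<in> ators act"
proof -
  assume "z1 \<in> ators act" "z2 \<in> ators act"
  then obtain n1 n2 where n: "(act A_a ^^ n1) z1 = 0" "(act A_a ^^ n2) z2 = 0"
    unfolding ators_def by blast
  have A0: "(act A_a ^^ k) 0 = 0" for k
  proof -
    have "\<forall>x y. (act A_a ^^ k) (x + y) = (act A_a ^^ k) x + (act A_a ^^ k) y"
      using additive_funpow[OF m_additive[OF A_a_Aconv]] by blast
    then show ?thesis by (rule additive_zero)
  qed
  have "(act A_a ^^ (n2 + n1)) z1 = 0" using n A0 by (simp add: funpow_add)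
  moreover have "(act A_a ^^ (n1 + n2)) z2 = 0" using n A0 by (simp add: funpow_add)
  ultimately have "(act A_a ^^ (n1 + n2)) (z1 + z2) = 0"
    using additive_funpow[OF m_additive[OF A_a_Aconv]] by (simp add: add.commute)
  then show ?thesis unfolding ators_def by blast
qed

lemma atilde_B: "y \<in> atilde act \<Longrightarrow> act A_b y \<in> atilde act"
proof -
  assume y: "y \<in> atilde act"
  show ?thesis unfolding atilde_def
  proof
    show "\<forall>\<beta>\<in>Bconv. act \<beta> (act A_b y) \<in> ators act"
    proof
      fix \<beta> assume b: "\<beta> \<in> Bconv"
      have "act \<beta> (act A_b y) = act (A_mult \<beta> A_b) y"
        using m_mult[OF Bconv_Aconv[OF b] A_b_Aconv] by simp
      then show "act \<beta> (act A_b y) \<in> ators act"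
        using y bB_Bconv[OF b] unfolding atilde_def by auto
    qed
  qed
qed

lemma atilde_A: "y \<in> atilde act \<Longrightarrow> act A_a y \<in> atilde act"
proof -
  assume y: "y \<in> atilde act"
  show ?thesis unfolding atilde_def
  proof
    show "\<forall>\<beta>\<in>Bconv. act \<beta> (act A_a y) \<in> ators act"
    proof
      fix \<beta> assume b: "\<beta> \<in> Bconv"
      have "act \<beta> (act A_a y) = act (A_mult \<beta> A_a) y"
        using m_mult[OF Bconv_Aconv[OF b] A_a_Aconv] by simp
      also have "\<dots> = act (A_mult A_a \<beta>) y + act (gam \<beta>) y"
        unfolding bA_eq[OF Bconv_Btype[OF b]]
        by (rule m_addser[OF aB_Aconv[OF b] Bconv_Aconv[OF gam_Bconv[OF b]]])
      also have "act (A_mult A_a \<beta>) y = act A_a (act \<beta> y)"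
        by (rule m_mult[OF A_a_Aconv Bconv_Aconv[OF b]])
      finally have e: "act \<beta> (act A_a y) = act A_a (act \<beta> y) + act (gam \<beta>) y" .
      have "act \<beta> y \<in> ators act" "act (gam \<beta>) y \<in> ators act"
        using y b gam_Bconv[OF b] unfolding atilde_def by auto
      then show "act \<beta> (act A_a y) \<in> ators act"
        unfolding e by (intro ators_add ators_A)
    qed
  qed
qed

end

theorem lemma2p5p3:
  fixes act :: "ser \<Rightarrow> 'm::ab_group_add \<Rightarrow> 'm" and N :: nat
  assumes "Aconv_module act"
    and "btors act \<subseteq> atilde act"
    and "\<forall>x\<in>atilde act. (act A_a ^^ N) x = 0"
  shows "btors act = atilde act \<and> atilde act \<subseteq> {x. (act A_b ^^ (2 * N)) x = 0}"
proof -
  have k: "\<forall>y\<in>atilde act. (act A_b ^^ (2 * N)) y = 0"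
    by (rule core[OF m_additive[OF assms(1) A_a_Aconv] m_additive[OF assms(1) A_b_Aconv]
        allI[OF m_rel[OF assms(1)]] m_canc[OF assms(1)]
        ballI[OF atilde_A[OF assms(1)]] ballI[OF atilde_B[OF assms(1)]] assms(3)])
  then have "atilde act \<subseteq> btors act" unfolding btors_def by blast
  then show ?thesis using assms(2) k by blast
qed

end
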